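(* Let $L>0$ be even and $A=\{x\in\{0,1\}^L: x_1+\dots+x_L=L/2\}$. Let $g:A\to A$ be an arbitrary function. Then there exist $m>0$ and a Boolean network with inputs $B$, with designated input variables $a=(a_1,\dots,a_L)$, $d=(d_1,d_2)$ and designated output variables $c=(c_1,\dots,c_L)$, such that for every time $t$, every input sequence, and every initial condition of $B$, whenever $a(t)\in A$ we have $c(t+m)=a(t)$ if $d(t)=(0,1)$, and $c(t+m)=g(a(t))$ if $d(t)=(1,0)$. Moreover $B$ is cooperative, every node of its digraph has indegree and outdegree at most $2$, every input variable has indegree $0$ and every output variable has outdegree $0$.
   Context: A Boolean network with inputs consists of finitely many Boolean variables, some designated as input variables whose values at each time are prescribed externally (arbitrarily), and the remaining (internal) variables, each updated simultaneously at each discrete time step by $x(t)=f_x(\text{values of all variables at time } t-1)$ for a Boolean function $f_x$; output variables are designated internal variables. It is cooperative if every update function $f_x$ is monotone nondecreasing with respect to the componentwise order (equivalently, expressible using only $\wedge$ and $\vee$). Its digraph has an arc from variable $y$ to internal variable $x$ iff $f_x$ actually depends on $y$ (flipping $y$ from $0$ to $1$ with all else fixed can raise $f_x$ from $0$ to $1$). *)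

theory Defs
  imports Main
begin

text \<open>A Boolean network with inputs: variables are natural numbers. \<open>Inp\<close> is the
finite set of input variables, \<open>Itn\<close> the finite set of internal variables
(disjoint), and \<open>f v\<close> is the update function of internal variable \<open>v\<close>, acting on
states \<open>nat \<Rightarrow> bool\<close> (only the values on \<open>Inp \<union> Itn\<close> matter).\<close>

definition bn_wf :: "nat set \<Rightarrow> nat set \<Rightarrow> (nat \<Rightarrow> (nat \<Rightarrow> bool) \<Rightarrow> bool) \<Rightarrow> bool" where
  "bn_wf Inp Itn f \<longleftrightarrow> finite Inp \<and> finite Itn \<and> Inp \<inter> Itn = {} \<and>
     (\<forall>v\<in>Itn. \<forall>s s'. (\<forall>y\<in>Inp \<union> Itn. s y = s' y) \<longrightarrow> f v s = f v s')"

text \<open>Trajectories: input values and the initial state are arbitrary; internal variables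
are updated synchronously.\<close>
definition bn_traj :: "nat set \<Rightarrow> (nat \<Rightarrow> (nat \<Rightarrow> bool) \<Rightarrow> bool) \<Rightarrow> (nat \<Rightarrow> nat \<Rightarrow> bool) \<Rightarrow> bool" where
  "bn_traj Itn f x \<longleftrightarrow> (\<forall>t. \<forall>v\<in>Itn. x (Suc t) v = f v (x t))"

definition bn_cooperative :: "nat set \<Rightarrow> (nat \<Rightarrow> (nat \<Rightarrow> bool) \<Rightarrow> bool) \<Rightarrow> bool" where
  "bn_cooperative Itn f \<longleftrightarrow> (\<forall>v\<in>Itn. mono (f v))"

definition bn_arc :: "nat set \<Rightarrow> nat set \<Rightarrow> (nat \<Rightarrow> (nat \<Rightarrow> bool) \<Rightarrow> bool) \<Rightarrow> nat \<Rightarrow> nat \<Rightarrow> bool" where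
  "bn_arc Inp Itn f y v \<longleftrightarrow> y \<in> Inp \<union> Itn \<and> v \<in> Itn \<and>
     (\<exists>s. \<not> f v (s(y := False)) \<and> f v (s(y := True)))"

definition bn_indeg :: "nat set \<Rightarrow> nat set \<Rightarrow> (nat \<Rightarrow> (nat \<Rightarrow> bool) \<Rightarrow> bool) \<Rightarrow> nat \<Rightarrow> nat" where
  "bn_indeg Inp Itn f v = card {y \<in> Inp \<union> Itn. bn_arc Inp Itn f y v}"

definition bn_outdeg :: "nat set \<Rightarrow> nat set \<Rightarrow> (nat \<Rightarrow> (nat \<Rightarrow> bool) \<Rightarrow> bool) \<Rightarrow> nat \<Rightarrow> nat" where
  "bn_outdeg Inp Itn f y = card {v \<in> Itn. bn_arc Inp Itn f y v}"

text \<open>The set A of 0/1 vectors of length L (indices 0..L-1, extended by False) with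
exactly L/2 ones.\<close>
definition balanced_set :: "nat \<Rightarrow> (nat \<Rightarrow> bool) set" where
  "balanced_set L = {z. (\<forall>i\<ge>L. \<not> z i) \<and> card {i. i < L \<and> z i} = L div 2}"

end

theory Submission imports Defs "HOL-Library.Nat_Bijection" "HOL-Library.Countable" begin
lemma set_encode_lt: "A \<subseteq> {..<L} \<Longrightarrow> set_encode A < 2^L"
proof (induction L arbitrary: A)
  case 0 then show ?case by simp
next
  case (Suc L)
  show ?case
  proof (cases "L \<in> A")
    case True
    have f: "finite (A - {L})" using Suc.prems finite_subset by blast
    have "A = insert L (A - {L})" using True by blast
    then have "set_encode A = 2^L + set_encode (A - {L})"
      using f by (metis Diff_iff set_encode_insert singletonI)
    moreover have "set_encode (A - {L}) < 2^L" using Suc.prems by (intro Suc.IH) (auto simp: less_Suc_eq)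
    ultimately show ?thesis by simp
  next
    case False
    then have "A \<subseteq> {..<L}" using Suc.prems by (auto simp: less_Suc_eq)
    then show ?thesis using Suc.IH[of A] by simp
  qed
qed

fun tv :: "nat \<Rightarrow> (nat \<Rightarrow> bool) \<Rightarrow> nat \<Rightarrow> nat \<Rightarrow> bool" where
  "tv Q lv 0 j = lv j"
| "tv Q lv (Suc h) j = (if Suc h \<le> Q then tv Q lv h (2*j) \<and> tv Q lv h (2*j+1)
                        else tv Q lv h (2*j) \<or> tv Q lv h (2*j+1))"

lemma split_range: "(\<forall>q::nat<2^Suc h. P (j*2^Suc h + q)) \<longleftrightarrow>
   (\<forall>q<2^h. P (2*j*2^h + q)) \<and> (\<forall>q<2^h. P ((2*j+1)*2^h + q))"
proof -
  have "(\<forall>q<2^Suc h. P (j*2^Suc h + q)) \<longleftrightarrow> (\<forall>q<2^h. P (j*2^Suc h + q)) \<and> (\<forall>q<2^h. P (j*2^Suc h + 2^h + q))"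
  proof safe
    fix q :: nat assume a: "\<forall>q<2^h. P (j*2^Suc h + q)" "\<forall>q<2^h. P (j*2^Suc h + 2^h + q)" "q < 2^Suc h"
    show "P (j*2^Suc h + q)"
    proof (cases "q < 2^h")
      case True then show ?thesis using a by auto
    next
      case False
      then have "q - 2^h < 2^h" "j*2^Suc h + q = j*2^Suc h + 2^h + (q - 2^h)" using a(3) by auto
      then show ?thesis using a(2) by metis
    qed
  qed (auto simp: add.assoc)
  also have "\<dots> \<longleftrightarrow> (\<forall>q<2^h. P (2*j*2^h + q)) \<and> (\<forall>q<2^h. P ((2*j+1)*2^h + q))" by (simp add: algebra_simps)
  finally show ?thesis .
qed

lemma split_range_ex: "(\<exists>q::nat<2^Suc h. P (j*2^Suc h + q)) \<longleftrightarrow>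
   (\<exists>q<2^h. P (2*j*2^h + q)) \<or> (\<exists>q<2^h. P ((2*j+1)*2^h + q))"
  using split_range[of h "\<lambda>x. \<not> P x" j] by blast

lemma tv_and: "h \<le> Q \<Longrightarrow> tv Q lv h j = (\<forall>q<2^h. lv (j*2^h+q))"
proof (induction h arbitrary: j)
  case 0 then show ?case by simp
next
  case (Suc h)
  have "tv Q lv (Suc h) j = (tv Q lv h (2*j) \<and> tv Q lv h (2*j+1))" using Suc.prems by simp
  also have "\<dots> = (\<forall>q<2^Suc h. lv (j*2^Suc h+q))" unfolding Suc.IH[OF Suc_leD[OF Suc.prems]] using split_range[of h lv j] by (simp only:)
  finally show ?case .
qed

lemma tv_or: "tv Q lv (Q+r) j = (\<exists>p<2^r. \<forall>q<2^Q. lv ((j*2^r+p)*2^Q+q))"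
proof (induction r arbitrary: j)
  case 0 then show ?case by (simp add: tv_and)
next
  case (Suc r)
  have "tv Q lv (Q + Suc r) j = (tv Q lv (Q+r) (2*j) \<or> tv Q lv (Q+r) (2*j+1))" by simp
  also have "\<dots> = (\<exists>p<2^Suc r. \<forall>q<2^Q. lv ((j*2^Suc r+p)*2^Q+q))"
    unfolding Suc.IH using split_range_ex[of r "\<lambda>p. \<forall>q<2^Q. lv (p*2^Q+q)" j] by (simp only:)
  finally show ?case .
qed

datatype node = In nat | Cp nat nat nat | Ev nat nat nat
instance node :: countable by countable_datatype

definition ybits :: "nat \<Rightarrow> nat \<Rightarrow> bool" where "ybits p = (\<lambda>j. j \<in> set_decode p)"

definition leafvar :: "nat \<Rightarrow> ((nat \<Rightarrow> bool) \<Rightarrow> (nat \<Rightarrow> bool)) \<Rightarrow> nat \<Rightarrow> nat \<Rightarrow> nat \<Rightarrow> nat" where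
  "leafvar L g i p q = (if p = 2^L then (if q = 0 then L+1 else i)
     else if ybits p \<in> balanced_set L \<and> g (ybits p) i then (if q < L \<and> q \<in> set_decode p then q else L)
     else (if q = 0 then L else L+1))"

definition vr :: "nat \<Rightarrow> ((nat \<Rightarrow> bool) \<Rightarrow> (nat \<Rightarrow> bool)) \<Rightarrow> nat \<Rightarrow> nat \<Rightarrow> nat" where
  "vr L g i j = leafvar L g i (j div 2^L) (j mod 2^L)"

fun F :: "nat \<Rightarrow> ((nat \<Rightarrow> bool) \<Rightarrow> (nat \<Rightarrow> bool)) \<Rightarrow> node \<Rightarrow> (node \<Rightarrow> bool) \<Rightarrow> bool" where
  "F L g (In y) s = False"
| "F L g (Cp y k j) s = s (if k = 0 then In y else Cp y (k-1) (j div 2))"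
| "F L g (Ev i 0 j) s = s (Cp (vr L g i j) (3*L+1) (i*2^(2*L+1) + j))"
| "F L g (Ev i (Suc h) j) s = (if Suc h \<le> L then s (Ev i h (2*j)) \<and> s (Ev i h (2*j+1))
                              else s (Ev i h (2*j)) \<or> s (Ev i h (2*j+1)))"

fun R :: "nat \<Rightarrow> ((nat \<Rightarrow> bool) \<Rightarrow> (nat \<Rightarrow> bool)) \<Rightarrow> node \<Rightarrow> node set" where
  "R L g (In y) = {}"
| "R L g (Cp y k j) = {if k = 0 then In y else Cp y (k-1) (j div 2)}"
| "R L g (Ev i 0 j) = {Cp (vr L g i j) (3*L+1) (i*2^(2*L+1) + j)}"
| "R L g (Ev i (Suc h) j) = {Ev i h (2*j), Ev i h (2*j+1)}"

fun S :: "nat \<Rightarrow> node \<Rightarrow> node set" where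
  "S L (In y) = {Cp y 0 0}"
| "S L (Cp y k j) = (if k < 3*L+1 then {Cp y (k+1) (2*j), Cp y (k+1) (2*j+1)}
                     else {Ev (j div 2^(2*L+1)) 0 (j mod 2^(2*L+1))})"
| "S L (Ev i h j) = (if h < 2*L+1 then {Ev i (Suc h) (j div 2)} else {})"

definition InpN :: "nat \<Rightarrow> node set" where "InpN L = In ` {..<L+2}"
definition ItnN :: "nat \<Rightarrow> node set" where
  "ItnN L = {Cp y k j | y k j. y < L+2 \<and> k \<le> 3*L+1 \<and> j < 2^k}
          \<union> {Ev i h j | i h j. i < L \<and> h \<le> 2*L+1 \<and> j < 2^(2*L+1-h)}"

lemma F_local: "(\<forall>r\<in>R L g n. s r = s' r) \<Longrightarrow> F L g n s = F L g n s'"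
  by (cases "(L,g,n,s)" rule: F.cases) auto

lemma card_R: "card (R L g n) \<le> 2"
  by (cases "(L,g,n)" rule: R.cases) (auto simp: card_insert_if)

lemma finite_R: "finite (R L g n)"
  by (cases "(L,g,n)" rule: R.cases) auto

lemma card_S: "card (S L n) \<le> 2"
  by (cases "(L,n)" rule: S.cases) (auto simp: card_insert_if)

lemma finite_S: "finite (S L n)"
  by (cases "(L,n)" rule: S.cases) auto

lemma F_mono: "mono (F L g n)"
  by (cases n; cases "case n of Ev i h j \<Rightarrow> h | _ \<Rightarrow> 0") (auto simp: mono_def le_fun_def)

lemma leafvar_lt: "i < L \<Longrightarrow> leafvar L g i p q < L+2"
  by (simp add: leafvar_def)

lemma vr_lt: "i < L \<Longrightarrow> vr L g i j < L+2"
  unfolding vr_def by (rule leafvar_lt)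

lemma idx_bound: assumes "i < L" "j < 2^(2*L+1)" shows "i*2^(2*L+1) + j < 2^(3*L+1)"
proof -
  have "i*2^(2*L+1) + j < (i+1)*2^(2*L+1)" using assms by simp
  also have "\<dots> \<le> L * 2^(2*L+1)" using assms(1) by (intro mult_right_mono) auto
  also have "\<dots> \<le> 2^L * 2^(2*L+1)" by (intro mult_right_mono) (auto intro: less_imp_le)
  also have "\<dots> = 2^(3*L+1)" by (simp add: power_add[symmetric])
  finally show ?thesis .
qed

lemma R_sub: "n \<in> ItnN L \<Longrightarrow> R L g n \<subseteq> InpN L \<union> ItnN L"
proof -
  assume n: "n \<in> ItnN L"
  show ?thesis
  proof (cases "(L,g,n)" rule: R.cases)
    case (2 L' g' y k j)
    then show ?thesis using n
      by (auto simp: ItnN_def InpN_def less_mult_imp_div_less)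
        (metis Suc_pred less_mult_imp_div_less power_Suc2)
  next
    case (3 L' g' i j)
    then show ?thesis using n vr_lt[of i L g j] idx_bound[of i L j]
      by (auto simp: ItnN_def InpN_def)
  next
    case (4 L' g' i h j)
    then have h: "h \<le> 2*L" "j < 2^(2*L-h)" "i < L" using n by (auto simp: ItnN_def)
    then have "2*L+1-h = Suc (2*L-h)" by simp
    then have "2*j+1 < 2^(2*L+1-h)" using h(2) by simp
    then show ?thesis using 4 h by (auto simp: ItnN_def InpN_def)
  qed (auto)
qed

lemma reader: "n \<in> ItnN L \<Longrightarrow> y \<in> R L g n \<Longrightarrow> n \<in> S L y"
proof -
  assume n: "n \<in> ItnN L" and y: "y \<in> R L g n"
  show ?thesis
  proof (cases "(L,g,n)" rule: R.cases)
    case (2 L' g' y' k j)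
    then show ?thesis using n y by (auto simp: ItnN_def split: if_splits)
  next
    case (3 L' g' i j)
    then show ?thesis using n y by (auto simp: ItnN_def)
  next
    case (4 L' g' i h j)
    then show ?thesis using n y by (auto simp: ItnN_def)
  qed (use y in auto)
qed
lemma balanced_eq:
  assumes y: "y \<in> balanced_set L" and z: "z \<in> balanced_set L" and le: "\<forall>j<L. y j \<longrightarrow> z j"
  shows "y = z"
proof -
  have sub: "{i. i < L \<and> y i} \<subseteq> {i. i < L \<and> z i}" using le by auto
  have "card {i. i < L \<and> y i} = card {i. i < L \<and> z i}" using y z by (simp add: balanced_set_def)
  then have eq: "{i. i < L \<and> y i} = {i. i < L \<and> z i}"
    using card_subset_eq[OF _ sub] by auto
  show ?thesis
  proof
    fix j show "y j = z j"
    proof (cases "j < L")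
      case True then show ?thesis using eq by blast
    next
      case False then show ?thesis using y z by (simp add: balanced_set_def)
    qed
  qed
qed

lemma root_correct:
  assumes L: "L > 0" and i: "i < L" and z: "z \<in> balanced_set L"
    and zv: "\<forall>j<L. val j = z j"
  shows "(\<not> val L \<and> val (L+1)) \<longrightarrow> (\<exists>p<2^(L+1). \<forall>q<2^L. val (leafvar L g i p q)) = z i"
    and "(val L \<and> \<not> val (L+1)) \<longrightarrow> (\<exists>p<2^(L+1). \<forall>q<2^L. val (leafvar L g i p q)) = g z i"
proof -
  have one: "(1::nat) < 2^L" using L less_exp[of L] by linarith
  have Lq: "L < (2::nat)^L" by simp
  show "(\<not> val L \<and> val (L+1)) \<longrightarrow> (\<exists>p<2^(L+1). \<forall>q<2^L. val (leafvar L g i p q)) = z i"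
  proof (intro impI iffI)
    assume d: "\<not> val L \<and> val (L+1)"
    { assume "\<exists>p<2^(L+1). \<forall>q<2^L. val (leafvar L g i p q)"
      then obtain p where p: "\<forall>q<2^L. val (leafvar L g i p q)" by blast
      show "z i"
      proof (cases "p = 2^L")
        case True then show ?thesis using p[rule_format, OF one] zv i by (simp add: leafvar_def)
      next
        case False
        then show ?thesis using p[rule_format, OF Lq] p[rule_format, of 0] d
          by (auto simp: leafvar_def split: if_splits)
      qed }
    assume "z i"
    then show "\<exists>p<2^(L+1). \<forall>q<2^L. val (leafvar L g i p q)"
      using d zv i by (intro exI[of _ "2^L"]) (auto simp: leafvar_def)
  qed
  show "(val L \<and> \<not> val (L+1)) \<longrightarrow> (\<exists>p<2^(L+1). \<forall>q<2^L. val (leafvar L g i p q)) = g z i"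
  proof (intro impI iffI)
    assume d: "val L \<and> \<not> val (L+1)"
    { assume "\<exists>p<2^(L+1). \<forall>q<2^L. val (leafvar L g i p q)"
      then obtain p where p: "\<forall>q<2^L. val (leafvar L g i p q)" by blast
      show "g z i"
      proof (cases "p \<noteq> 2^L \<and> ybits p \<in> balanced_set L \<and> g (ybits p) i")
        case True
        have "\<forall>j<L. ybits p j \<longrightarrow> z j"
        proof (intro allI impI)
          fix j assume j: "j < L" "ybits p j"
          then have "j < 2^L" using Lq by linarith
          then show "z j" using p[rule_format, of j] True j zv by (auto simp: leafvar_def ybits_def)
        qed
        then have "ybits p = z" using balanced_eq True z by blast
        then show ?thesis using True by simp
      next
        case False
        then show ?thesis using p[rule_format, OF one] p[rule_format, of 0] d
          by (auto simp: leafvar_def split: if_splits)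
      qed }
    assume gz: "g z i"
    define p where "p = set_encode {j. j < L \<and> z j}"
    have fin: "finite {j. j < L \<and> z j}" by simp
    have plt: "p < 2^L" unfolding p_def by (rule set_encode_lt) auto
    have yb: "ybits p = z"
    proof
      fix j show "ybits p j = z j"
        using z fin unfolding ybits_def p_def by (auto simp: balanced_set_def not_less[symmetric])
    qed
    show "\<exists>p<2^(L+1). \<forall>q<2^L. val (leafvar L g i p q)"
    proof (intro exI[of _ p] conjI allI impI)
      show "p < 2^(L+1)" using plt by simp
      fix q :: nat assume "q < 2^L"
      show "val (leafvar L g i p q)"
        using plt yb gz z d zv by (auto simp: leafvar_def ybits_def)
    qed
  qed
qed
theorem lemma5:
  fixes L :: nat and g :: "(nat \<Rightarrow> bool) \<Rightarrow> (nat \<Rightarrow> bool)"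
  assumes "L > 0" and "even L"
    and "\<forall>z\<in>balanced_set L. g z \<in> balanced_set L"
  shows "\<exists>(m::nat) Inp Itn f (a::nat \<Rightarrow> nat) d1 d2 (c::nat \<Rightarrow> nat).
    m > 0 \<and> bn_wf Inp Itn f \<and>
    inj_on a {..<L} \<and> d1 \<noteq> d2 \<and> d1 \<notin> a ` {..<L} \<and> d2 \<notin> a ` {..<L} \<and>
    Inp = a ` {..<L} \<union> {d1, d2} \<and>
    inj_on c {..<L} \<and> c ` {..<L} \<subseteq> Itn \<and>
    (\<forall>x t. bn_traj Itn f x \<longrightarrow>
       (\<lambda>i. if i < L then x t (a i) else False) \<in> balanced_set L \<longrightarrow>
       ((\<not> x t d1 \<and> x t d2) \<longrightarrow> (\<forall>i<L. x (t + m) (c i) = x t (a i))) \<and>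
       ((x t d1 \<and> \<not> x t d2) \<longrightarrow>
          (\<forall>i<L. x (t + m) (c i) = g (\<lambda>j. if j < L then x t (a j) else False) i))) \<and>
    bn_cooperative Itn f \<and>
    (\<forall>v\<in>Inp \<union> Itn. bn_indeg Inp Itn f v \<le> 2 \<and> bn_outdeg Inp Itn f v \<le> 2) \<and>
    (\<forall>v\<in>Inp. bn_indeg Inp Itn f v = 0) \<and>
    (\<forall>i<L. bn_outdeg Inp Itn f (c i) = 0)"
proof -
  define Inp where "Inp = to_nat ` InpN L"
  define Itn where "Itn = to_nat ` ItnN L"
  define f where "f = (\<lambda>v (s::nat \<Rightarrow> bool). F L g (from_nat v) (\<lambda>n. s (to_nat n)))"
  define a where "a = (\<lambda>i. to_nat (In i))"
  define d1 where "d1 = to_nat (In L)"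
  define d2 where "d2 = to_nat (In (L+1))"
  define c where "c = (\<lambda>i. to_nat (Ev i (2*L+1) 0))"
  define m where "m = 5*L+4"
  have fInp: "finite (InpN L)" by (simp add: InpN_def)
  have fItn: "finite (ItnN L)"
  proof -
    have "ItnN L \<subseteq> (\<lambda>(y,k,j). Cp y k j) ` ({..<L+2} \<times> {..3*L+1} \<times> {..<2^(3*L+1)})
              \<union> (\<lambda>(i,h,j). Ev i h j) ` ({..<L} \<times> {..2*L+1} \<times> {..<2^(2*L+1)})" (is "_ \<subseteq> ?B")
    proof
      fix n assume "n \<in> ItnN L"
      then consider y k j where "n = Cp y k j" "y < L+2" "k \<le> 3*L+1" "j < 2^k"
        | i h j where "n = Ev i h j" "i < L" "h \<le> 2*L+1" "j < 2^(2*L+1-h)"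
        unfolding ItnN_def by blast
      then show "n \<in> ?B"
      proof cases
        case 1
        then have "j < 2^(3*L+1)" using power_increasing[of k "3*L+1" "2::nat"]
          by (meson less_le_trans one_le_numeral)
        then show ?thesis using 1 by (auto intro!: image_eqI[of _ _ "(y,k,j)"])
      next
        case 2
        then have "j < 2^(2*L+1)" using power_increasing[of "2*L+1-h" "2*L+1" "2::nat"]
          by (meson diff_le_self less_le_trans one_le_numeral)
        then show ?thesis using 2 by (auto intro!: image_eqI[of _ _ "(i,h,j)"])
      qed
    qed
    then show ?thesis by (rule finite_subset) auto
  qed
  have disjN: "InpN L \<inter> ItnN L = {}" by (auto simp: InpN_def ItnN_def)
  have inj: "inj to_nat" by simp
  have fto: "\<And>n. f (to_nat n) = (\<lambda>s. F L g n (\<lambda>n. s (to_nat n)))" by (simp add: f_def)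
  have arc: "\<exists>nv ny. v = to_nat nv \<and> nv \<in> ItnN L \<and> y = to_nat ny \<and> ny \<in> R L g nv"
    if "bn_arc Inp Itn f y v" for y v
  proof -
    from that obtain s where y: "y \<in> Inp \<union> Itn" and v: "v \<in> Itn"
      and s: "\<not> f v (s(y := False))" "f v (s(y := True))" unfolding bn_arc_def by blast
    obtain nv where nv: "v = to_nat nv" "nv \<in> ItnN L" using v Itn_def by blast
    obtain ny :: node where ny: "y = to_nat ny" using y unfolding Inp_def Itn_def by blast
    have "ny \<in> R L g nv"
    proof (rule ccontr)
      assume nr: "ny \<notin> R L g nv"
      have "F L g nv (\<lambda>n. (s(y := False)) (to_nat n)) = F L g nv (\<lambda>n. (s(y := True)) (to_nat n))"
      proof (rule F_local, intro ballI)
        fix r assume "r \<in> R L g nv"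
        then have "to_nat r \<noteq> y" using nr ny inj by (metis from_nat_to_nat)
        then show "(s(y := False)) (to_nat r) = (s(y := True)) (to_nat r)" by simp
      qed
      then show False using s nv fto by simp
    qed
    then show ?thesis using nv ny by blast
  qed
  have indeg: "bn_indeg Inp Itn f v \<le> 2" for v
  proof (cases "v \<in> Itn")
    case True
    then obtain nv :: node where nv: "v = to_nat nv" "nv \<in> ItnN L" using Itn_def by blast
    have "{y \<in> Inp \<union> Itn. bn_arc Inp Itn f y v} \<subseteq> to_nat ` R L g nv"
      using arc nv by (auto dest!: arc)
    then have "bn_indeg Inp Itn f v \<le> card (to_nat ` R L g nv)"
      unfolding bn_indeg_def by (intro card_mono) (auto simp: finite_R)
    also have "\<dots> \<le> card (R L g nv)" by (rule card_image_le) (simp add: finite_R)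
    finally show ?thesis using card_R[of L g nv] by linarith
  next
    case False
    then have "{y \<in> Inp \<union> Itn. bn_arc Inp Itn f y v} = {}" by (auto simp: bn_arc_def)
    then show ?thesis unfolding bn_indeg_def by (metis card.empty zero_le)
  qed
  have outsub: "{v \<in> Itn. bn_arc Inp Itn f (to_nat ny) v} \<subseteq> to_nat ` S L ny" for ny
  proof
    fix v assume "v \<in> {v \<in> Itn. bn_arc Inp Itn f (to_nat ny) v}"
    then obtain nv ny' where "v = to_nat nv" "nv \<in> ItnN L" "to_nat ny = to_nat ny'" "ny' \<in> R L g nv"
      using arc by blast
    then show "v \<in> to_nat ` S L ny" using reader inj by (metis from_nat_to_nat image_eqI)
  qed
  have outdeg: "bn_outdeg Inp Itn f y \<le> card (S L (from_nat y))" if yin: "y \<in> Inp \<union> Itn" for y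
  proof -
    obtain ny :: node where ny: "y = to_nat ny" using yin unfolding Inp_def Itn_def by blast
    have "bn_outdeg Inp Itn f y \<le> card (to_nat ` S L ny)"
      unfolding bn_outdeg_def ny by (intro card_mono outsub) (simp add: finite_S)
    also have "\<dots> \<le> card (S L ny)" by (rule card_image_le) (simp add: finite_S)
    finally show ?thesis using ny by simp
  qed
  have wf: "bn_wf Inp Itn f"
    unfolding bn_wf_def
  proof (intro conjI ballI allI impI)
    show "finite Inp" "finite Itn" using fInp fItn by (auto simp: Inp_def Itn_def)
    show "Inp \<inter> Itn = {}" using disjN inj unfolding Inp_def Itn_def by (auto dest: injD)
    fix v and s s' :: "nat \<Rightarrow> bool" assume v: "v \<in> Itn" and ag: "\<forall>y\<in>Inp \<union> Itn. s y = s' y"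
    obtain nv where nv: "v = to_nat nv" "nv \<in> ItnN L" using v Itn_def by blast
    show "f v s = f v s'" unfolding nv fto
    proof (rule F_local, intro ballI)
      fix r assume "r \<in> R L g nv"
      then have "r \<in> InpN L \<union> ItnN L" using R_sub nv by blast
      then show "s (to_nat r) = s' (to_nat r)" using ag Inp_def Itn_def by blast
    qed
  qed
  have coop: "bn_cooperative Itn f"
    unfolding bn_cooperative_def
  proof
    fix v assume "v \<in> Itn"
    show "mono (f v)" unfolding f_def
    proof (rule monoI)
      fix s s' :: "nat \<Rightarrow> bool" assume "s \<le> s'"
      then have "(\<lambda>n. s (to_nat n)) \<le> (\<lambda>n. s' (to_nat n))" by (simp add: le_fun_def)
      then show "F L g (from_nat v) (\<lambda>n. s (to_nat n)) \<le> F L g (from_nat v) (\<lambda>n. s' (to_nat n))"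
        by (rule monoD[OF F_mono])
    qed
  qed
  have dyn: "(\<not> x t d1 \<and> x t d2 \<longrightarrow> (\<forall>i<L. x (t + m) (c i) = x t (a i))) \<and>
       (x t d1 \<and> \<not> x t d2 \<longrightarrow>
          (\<forall>i<L. x (t + m) (c i) = g (\<lambda>j. if j < L then x t (a j) else False) i))"
    if tr: "bn_traj Itn f x" and zb: "(\<lambda>i. if i < L then x t (a i) else False) \<in> balanced_set L"
    for x t
  proof -
    define X where "X = (\<lambda>t (n::node). x t (to_nat n))"
    have step: "X (Suc t') n = F L g n (X t')" if "n \<in> ItnN L" for t' n
      using tr that unfolding bn_traj_def X_def Itn_def by (simp add: fto)
    have cp: "X (t + k + 1) (Cp y k j) = X t (In y)" if "y < L+2" "k \<le> 3*L+1" "j < 2^k" for y k j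
      using that
    proof (induction k arbitrary: j)
      case 0
      then have "Cp y 0 j \<in> ItnN L" by (auto simp: ItnN_def)
      then show ?case using step by simp
    next
      case (Suc k)
      then have "Cp y (Suc k) j \<in> ItnN L" by (auto simp: ItnN_def)
      then have "X (t + Suc k + 1) (Cp y (Suc k) j) = X (t + k + 1) (Cp y k (j div 2))"
        using step[of "Cp y (Suc k) j" "t + k + 1"] by simp
      also have "\<dots> = X t (In y)" using Suc by (intro Suc.IH) (auto simp: less_mult_imp_div_less)
      finally show ?case .
    qed
    have ev: "X (t + (3*L+1) + 2 + h) (Ev i h j) = tv L (\<lambda>j. X t (In (vr L g i j))) h j"
      if "i < L" "h \<le> 2*L+1" "j < 2^(2*L+1-h)" for i h j
      using that
    proof (induction h arbitrary: j)
      case 0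
      then have "Ev i 0 j \<in> ItnN L" by (auto simp: ItnN_def)
      then have "X (t + (3*L+1) + 2 + 0) (Ev i 0 j) = X (t + (3*L+1) + 1) (Cp (vr L g i j) (3*L+1) (i*2^(2*L+1) + j))"
        using step[of "Ev i 0 j" "t + (3*L+1) + 1"] by simp
      also have "\<dots> = X t (In (vr L g i j))"
        using 0 by (intro cp vr_lt idx_bound) auto
      finally show ?case by simp
    next
      case (Suc h)
      then have mem: "Ev i (Suc h) j \<in> ItnN L" by (auto simp: ItnN_def)
      have "2*L+1-h = Suc (2*L+1-Suc h)" using Suc.prems by simp
      then have b: "2*j < 2^(2*L+1-h)" "2*j+1 < 2^(2*L+1-h)" using Suc.prems by auto
      have "X (t + (3*L+1) + 2 + Suc h) (Ev i (Suc h) j) = F L g (Ev i (Suc h) j) (X (t + (3*L+1) + 2 + h))"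
        using step[OF mem, of "t + (3*L+1) + 2 + h"] by simp
      then show ?case using Suc.IH[of "2*j"] Suc.IH[of "2*j+1"] b Suc.prems by simp
    qed
    define val where "val = (\<lambda>w. X t (In w))"
    define z where "z = (\<lambda>i. if i < L then x t (a i) else False)"
    have root: "x (t + m) (c i) = (\<exists>p<2^(L+1). \<forall>q<2^L. val (leafvar L g i p q))" if "i < L" for i
    proof -
      have "x (t + m) (c i) = X (t + (3*L+1) + 2 + (2*L+1)) (Ev i (2*L+1) 0)"
      proof -
        have eq: "t + m = t + (3*L+1) + 2 + (2*L+1)" by (simp add: m_def)
        show ?thesis unfolding X_def c_def by (simp only: eq)
      qed
      also have "\<dots> = tv L (\<lambda>j. X t (In (vr L g i j))) (L + (L+1)) 0"
        using ev[of i "2*L+1" 0] that by (simp add: mult_2)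
      also have "\<dots> = (\<exists>p<2^(L+1). \<forall>q<2^L. X t (In (vr L g i (p*2^L+q))))"
        using tv_or[of L "\<lambda>j. X t (In (vr L g i j))" "L+1" 0] by (simp only: mult_0 add_0)
      also have "\<dots> = (\<exists>p<2^(L+1). \<forall>q<2^L. val (leafvar L g i p q))"
        unfolding vr_def val_def by simp
      finally show ?thesis .
    qed
    have zv: "\<forall>j<L. val j = z j" by (simp add: val_def z_def X_def a_def)
    have vd: "val L = x t d1" "val (L+1) = x t d2" by (simp_all add: val_def X_def d1_def d2_def)
    have zb': "z \<in> balanced_set L" using zb by (simp add: z_def)
    show ?thesis
      using root_correct[OF assms(1) _ zb' zv, of _ g] root vd by (simp add: z_def)
  qed
  show ?thesis
  proof (rule exI[of _ m], rule exI[of _ Inp], rule exI[of _ Itn], rule exI[of _ f], rule exI[of _ a],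
      rule exI[of _ d1], rule exI[of _ d2], rule exI[of _ c], intro conjI)
    show "m > 0" by (simp add: m_def)
    show "bn_wf Inp Itn f" by (rule wf)
    show "inj_on a {..<L}" by (simp add: a_def inj_on_def)
    show "d1 \<noteq> d2" "d1 \<notin> a ` {..<L}" "d2 \<notin> a ` {..<L}" by (auto simp: d1_def d2_def a_def)
    show "Inp = a ` {..<L} \<union> {d1, d2}"
      by (auto simp: Inp_def InpN_def a_def d1_def d2_def image_iff less_Suc_eq)
    show "inj_on c {..<L}" by (simp add: c_def inj_on_def)
    show "c ` {..<L} \<subseteq> Itn" by (auto simp: c_def Itn_def ItnN_def)
    show "\<forall>x t. bn_traj Itn f x \<longrightarrow>
       (\<lambda>i. if i < L then x t (a i) else False) \<in> balanced_set L \<longrightarrow>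
       ((\<not> x t d1 \<and> x t d2) \<longrightarrow> (\<forall>i<L. x (t + m) (c i) = x t (a i))) \<and>
       ((x t d1 \<and> \<not> x t d2) \<longrightarrow>
          (\<forall>i<L. x (t + m) (c i) = g (\<lambda>j. if j < L then x t (a j) else False) i))"
      using dyn by blast
    show "bn_cooperative Itn f" by (rule coop)
    show "\<forall>v\<in>Inp \<union> Itn. bn_indeg Inp Itn f v \<le> 2 \<and> bn_outdeg Inp Itn f v \<le> 2"
      using indeg outdeg card_S order_trans by blast
    show "\<forall>v\<in>Inp. bn_indeg Inp Itn f v = 0"
    proof
      fix v assume "v \<in> Inp"
      then have "v \<notin> Itn" using disjN inj unfolding Inp_def Itn_def by (auto dest: injD)
      then have "{y \<in> Inp \<union> Itn. bn_arc Inp Itn f y v} = {}" by (auto simp: bn_arc_def)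
      then show "bn_indeg Inp Itn f v = 0" unfolding bn_indeg_def by (metis card.empty)
    qed
    show "\<forall>i<L. bn_outdeg Inp Itn f (c i) = 0"
    proof (intro allI impI)
      fix i assume "i < L"
      have "bn_outdeg Inp Itn f (c i) \<le> card (to_nat ` S L (Ev i (2*L+1) 0))"
        unfolding bn_outdeg_def c_def by (intro card_mono outsub) (simp add: finite_S)
      then show "bn_outdeg Inp Itn f (c i) = 0" by simp
    qed
  qed
qed
end
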